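(* Let $C(\mathbf{x})$ be a $\Sigma\Pi\Sigma$ circuit of formal degree $d$ and top fan-in $s$. Then for every $k$ and every partition of $\mathbf{x}$ into $\mathbf{y}$ and $\mathbf{z}$, $\Gamma^{\mathrm{SED}}_{k,0}(C)\le s\cdot 2^d$.
   Context: A $\Sigma\Pi\Sigma$ circuit computes $\sum_{i=1}^{s}\prod_{j=1}^{d_i}L_{i,j}$ with each $L_{i,j}$ an affine form; $s$ is its top fan-in and $\max_i d_i$ its formal degree. For a partition $\mathbf{x}=\mathbf{y}\sqcup\mathbf{z}$ with $|\mathbf{y}|=n_y$, $|\mathbf{z}|=n_z$, the shifted evaluation dimension of a polynomial $P$ is $\Gamma^{\mathrm{SED}}_{k,\ell}(P)=\dim \mathrm{Span}\{\mathrm{Eval}_{\{0,1\}^{n_z}}(m\cdot P(\mathbf{a},\mathbf{z})) : m$ a monomial of degree exactly $\ell$ in $\mathbf{z},\ \mathbf{a}\in\{0,1\}^{n_y}$ with at most $k$ ones$\}$, where $\mathrm{Eval}_{\{0,1\}^{n_z}}(f)$ is the vector of values of $f$ on $\{0,1\}^{n_z}$; $\Gamma^{\mathrm{SED}}_{k,0}(C)$ means this quantity for the polynomial computed by $C$. *)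

theory Defs
  imports Main "HOL-Analysis.Analysis" "HOL-Library.Function_Algebras"
begin

text \<open>Variables are x_0,...,x_{n-1} (indices i < n).  An affine form is a pair
(constant term, coefficient function); only the coefficients of indices i < n matter.\<close>

type_synonym 'a affine = "'a \<times> (nat \<Rightarrow> 'a)"

definition eval_affine :: "nat \<Rightarrow> 'a::field affine \<Rightarrow> (nat \<Rightarrow> 'a) \<Rightarrow> 'a" where
  "eval_affine n L x = fst L + (\<Sum>i<n. snd L i * x i)"

type_synonym 'a spscircuit = "'a affine list list"

definition eval_circuit :: "nat \<Rightarrow> 'a::field spscircuit \<Rightarrow> (nat \<Rightarrow> 'a) \<Rightarrow> 'a" where
  "eval_circuit n C x = (\<Sum>P\<leftarrow>C. \<Prod>L\<leftarrow>P. eval_affine n L x)"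

definition top_fanin :: "'a spscircuit \<Rightarrow> nat" where
  "top_fanin C = length C"

definition formal_degree :: "'a spscircuit \<Rightarrow> nat" where
  "formal_degree C = Max (insert 0 (set (map length C)))"

definition bool_pt :: "nat set \<Rightarrow> nat \<Rightarrow> 'a::field" where
  "bool_pt S = (\<lambda>i. if i \<in> S then 1 else 0)"

text \<open>A point of {0,1}^{n_z} is a subset B of the z-variables (its ones); the evaluation
vector Eval of a function is represented as the function B \<mapsto> value for B \<subseteq> Z
(and 0 elsewhere), an element of the vector space nat set \<Rightarrow> 'a.
Monomials of degree exactly l in z are exponent vectors e supported on Z with sum l.\<close>

definition SED :: "nat \<Rightarrow> nat set \<Rightarrow> nat \<Rightarrow> nat \<Rightarrow> ((nat \<Rightarrow> 'a::field) \<Rightarrow> 'a) \<Rightarrow> nat" where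
  "SED n Y k l P =
     (let Z = {..<n} - Y in
      vector_space.dim (\<lambda>(c::'a) (f::nat set \<Rightarrow> 'a) B. c * f B)
        {(\<lambda>B. if B \<subseteq> Z
               then (\<Prod>i\<in>Z. (bool_pt B i :: 'a) ^ e i) * P (bool_pt (A \<union> B))
               else 0)
         | A e. A \<subseteq> Y \<and> card A \<le> k \<and> (\<forall>i. i \<notin> Z \<longrightarrow> e i = 0) \<and> (\<Sum>i\<in>Z. e i) = l})"

end

theory Submission
  imports Defs
begin

interpretation fv: vector_space "\<lambda>(c::'a::field) (f::nat set \<Rightarrow> 'a) B. c * f B"
  by unfold_locales (auto simp: fun_eq_iff algebra_simps)

definition ell :: "nat set \<Rightarrow> 'a::field affine \<Rightarrow> nat set \<Rightarrow> 'a" where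
  "ell Z L B = (\<Sum>i\<in>Z. snd L i * bool_pt B i)"

fun gens :: "nat set \<Rightarrow> 'a::field affine list \<Rightarrow> (nat set \<Rightarrow> 'a) set" where
  "gens Z [] = {\<lambda>B. if B \<subseteq> Z then 1 else 0}"
| "gens Z (L#P) = gens Z P \<union> (\<lambda>g B. ell Z L B * g B) ` gens Z P"

fun gensC :: "nat set \<Rightarrow> 'a::field spscircuit \<Rightarrow> (nat set \<Rightarrow> 'a) set" where
  "gensC Z [] = {}"
| "gensC Z (P#C) = gens Z P \<union> gensC Z C"

lemma gens_fin: "finite (gens Z P) \<and> card (gens Z P) \<le> 2 ^ length P"
proof (induction P)
  case Nil then show ?case by simp
next
  case (Cons L P)
  have "card (gens Z (L#P)) \<le> card (gens Z P) + card ((\<lambda>g B. ell Z L B * g B) ` gens Z P)"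
    by (simp add: card_Un_le)
  also have "\<dots> \<le> card (gens Z P) + card (gens Z P)"
    using card_image_le Cons by auto
  finally show ?case using Cons by auto
qed

lemma gensC_fin: "finite (gensC Z C) \<and> card (gensC Z C) \<le> (\<Sum>P\<leftarrow>C. 2 ^ length P)"
proof (induction C)
  case Nil then show ?case by simp
next
  case (Cons P C)
  have "card (gensC Z (P#C)) \<le> card (gens Z P) + card (gensC Z C)"
    by (simp add: card_Un_le)
  then show ?case using Cons gens_fin[of Z P] by auto
qed

lemma mul_span:
  assumes "h \<in> fv.span G"
  shows "(\<lambda>B. l B * h B) \<in> fv.span ((\<lambda>g B. (l B :: 'a::field) * g B) ` G)"
  using assms
proof (induction rule: fv.span_induct_alt)
  case base
  have "(\<lambda>B. l B * (0::nat set \<Rightarrow> 'a) B) = 0" by (simp add: fun_eq_iff)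
  then show ?case using fv.span_zero by simp
next
  case (step c x y)
  have "(\<lambda>B. l B * (c * x B + y B)) = (\<lambda>B. c * (l B * x B)) + (\<lambda>B. l B * y B)"
    by (simp add: fun_eq_iff algebra_simps)
  moreover have "(\<lambda>B. c * (l B * x B)) \<in> fv.span ((\<lambda>g B. l B * g B) ` G)"
  proof -
    have "(\<lambda>B. l B * x B) \<in> fv.span ((\<lambda>g B. l B * g B) ` G)"
      by (rule fv.span_base) (use step in auto)
    from fv.span_scale[OF this, of c] show ?thesis by simp
  qed
  ultimately show ?case using fv.span_add step by (simp add: plus_fun_def)
qed

lemma eval_split:
  assumes Y: "Y \<subseteq> {..<n}" and A: "A \<subseteq> Y" and B: "B \<subseteq> {..<n} - Y"
  shows "eval_affine n L (bool_pt (A \<union> B)) =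
     (fst L + (\<Sum>i\<in>Y. snd L i * bool_pt A i)) + ell ({..<n} - Y) L B"
proof -
  have fY: "finite Y" using Y finite_subset by blast
  have u: "{..<n} = Y \<union> ({..<n} - Y)" using Y by auto
  have "(\<Sum>i<n. snd L i * (bool_pt (A \<union> B) i :: 'a)) =
     (\<Sum>i\<in>Y. snd L i * bool_pt (A \<union> B) i) + (\<Sum>i\<in>{..<n} - Y. snd L i * bool_pt (A \<union> B) i)"
    by (subst u, rule sum.union_disjoint) (use fY in auto)
  also have "(\<Sum>i\<in>Y. snd L i * bool_pt (A \<union> B) i) = (\<Sum>i\<in>Y. snd L i * (bool_pt A i :: 'a))"
    using B by (intro sum.cong) (auto simp: bool_pt_def)
  also have "(\<Sum>i\<in>{..<n} - Y. snd L i * bool_pt (A \<union> B) i) = ell ({..<n} - Y) L (B :: nat set)"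
    unfolding ell_def using A by (intro sum.cong) (auto simp: bool_pt_def)
  finally show ?thesis by (simp add: eval_affine_def)
qed

lemma prod_span:
  assumes Y: "Y \<subseteq> {..<n}" and A: "A \<subseteq> Y"
  shows "(\<lambda>B. if B \<subseteq> {..<n} - Y then (\<Prod>L\<leftarrow>P. eval_affine n L (bool_pt (A \<union> B))) else 0)
     \<in> fv.span (gens ({..<n} - Y) (P :: 'a::field affine list))"
proof (induction P)
  case Nil
  have "(\<lambda>B. if B \<subseteq> {..<n} - Y then 1 else (0::'a)) \<in> fv.span (gens ({..<n} - Y) ([] :: 'a affine list))"
    by (rule fv.span_base) simp
  moreover have "(\<lambda>B. if B \<subseteq> {..<n} - Y then (\<Prod>L\<leftarrow>([] :: 'a affine list). eval_affine n L (bool_pt (A \<union> B))) else 0) = (\<lambda>B. if B \<subseteq> {..<n} - Y then 1 else (0::'a))"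
    by (rule ext) simp
  ultimately show ?case by simp
next
  case (Cons L P)
  define Z where "Z = {..<n} - Y"
  define h where "h = (\<lambda>B. if B \<subseteq> Z then (\<Prod>L\<leftarrow>P. eval_affine n L (bool_pt (A \<union> B))) else (0::'a))"
  define \<alpha> where "\<alpha> = fst L + (\<Sum>i\<in>Y. snd L i * (bool_pt A i :: 'a))"
  have hs: "h \<in> fv.span (gens Z P)" using Cons unfolding h_def Z_def .
  have eq: "(\<lambda>B. if B \<subseteq> Z then (\<Prod>L\<leftarrow>L#P. eval_affine n L (bool_pt (A \<union> B))) else 0)
      = (\<lambda>B. \<alpha> * h B) + (\<lambda>B. ell Z L B * h B)"
    using eval_split[OF Y A, of _ L] unfolding h_def \<alpha>_def Z_def
    by (auto simp: fun_eq_iff algebra_simps)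
  have s1: "(\<lambda>B. \<alpha> * h B) \<in> fv.span (gens Z (L#P))"
    using fv.span_scale[OF hs, of \<alpha>] fv.span_mono[of "gens Z P" "gens Z (L#P)"] by auto
  have s2: "(\<lambda>B. ell Z L B * h B) \<in> fv.span (gens Z (L#P))"
    using mul_span[OF hs, of "ell Z L"] fv.span_mono[of _ "gens Z (L#P)"] by auto
  show ?case using fv.span_add[OF s1 s2] eq unfolding Z_def by simp
qed

lemma circ_span:
  assumes Y: "Y \<subseteq> {..<n}" and A: "A \<subseteq> Y"
  shows "(\<lambda>B. if B \<subseteq> {..<n} - Y then eval_circuit n C (bool_pt (A \<union> B)) else 0)
     \<in> fv.span (gensC ({..<n} - Y) (C :: 'a::field spscircuit))"
proof (induction C)
  case Nil
  have "(\<lambda>B. if B \<subseteq> {..<n} - Y then eval_circuit n ([]::'a spscircuit) (bool_pt (A \<union> B)) else 0) = 0"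
    by (simp add: eval_circuit_def fun_eq_iff)
  then show ?case using fv.span_zero by simp
next
  case (Cons P C)
  define Z where "Z = {..<n} - Y"
  have eq: "(\<lambda>B. if B \<subseteq> Z then eval_circuit n (P#C) (bool_pt (A \<union> B)) else 0)
     = (\<lambda>B. if B \<subseteq> Z then (\<Prod>L\<leftarrow>P. eval_affine n L (bool_pt (A \<union> B))) else 0)
       + (\<lambda>B. if B \<subseteq> Z then eval_circuit n C (bool_pt (A \<union> B)) else 0)"
    by (auto simp: fun_eq_iff eval_circuit_def)
  have s1: "(\<lambda>B. if B \<subseteq> Z then (\<Prod>L\<leftarrow>P. eval_affine n L (bool_pt (A \<union> B))) else 0)
      \<in> fv.span (gensC Z (P#C))"
    using prod_span[OF Y A, of P] fv.span_mono[of "gens Z P" "gensC Z (P#C)"] unfolding Z_def by auto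
  have s2: "(\<lambda>B. if B \<subseteq> Z then eval_circuit n C (bool_pt (A \<union> B)) else 0) \<in> fv.span (gensC Z (P#C))"
    using Cons fv.span_mono[of "gensC Z C" "gensC Z (P#C)"] unfolding Z_def by auto
  show ?case using fv.span_add[OF s1 s2] eq unfolding Z_def by simp
qed

lemma sum_list_bound: "(\<And>x. x \<in> set xs \<Longrightarrow> f x \<le> (m::nat)) \<Longrightarrow> (\<Sum>x\<leftarrow>xs. f x) \<le> length xs * m"
  by (induction xs) (auto simp: add_mono)

theorem lemma6p2:
  fixes C :: "'a::field spscircuit" and n k :: nat and Y :: "nat set"
  assumes "Y \<subseteq> {..<n}"
  shows "SED n Y k 0 (eval_circuit n C) \<le> top_fanin C * 2 ^ formal_degree C"
proof -
  define Z where "Z = {..<n} - Y"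
  have fZ: "finite Z" unfolding Z_def by simp
  let ?S = "{(\<lambda>B. if B \<subseteq> Z
               then (\<Prod>i\<in>Z. (bool_pt B i :: 'a) ^ e i) * eval_circuit n C (bool_pt (A \<union> B))
               else 0)
         | A e. A \<subseteq> Y \<and> card A \<le> k \<and> (\<forall>i. i \<notin> Z \<longrightarrow> e i = 0) \<and> (\<Sum>i\<in>Z. e i) = (0::nat)}"
  have sub: "?S \<subseteq> fv.span (gensC Z C)"
  proof
    fix v assume "v \<in> ?S"
    then obtain A e where A: "A \<subseteq> Y" and e0: "\<forall>i. i \<notin> Z \<longrightarrow> e i = 0" and es: "(\<Sum>i\<in>Z. e i) = 0"
      and v: "v = (\<lambda>B. if B \<subseteq> Z
               then (\<Prod>i\<in>Z. (bool_pt B i :: 'a) ^ e i) * eval_circuit n C (bool_pt (A \<union> B))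
               else 0)" by blast
    have "\<forall>i\<in>Z. e i = 0" using es fZ by simp
    then have "v = (\<lambda>B. if B \<subseteq> Z then eval_circuit n C (bool_pt (A \<union> B)) else 0)"
      unfolding v by (auto simp: fun_eq_iff)
    then show "v \<in> fv.span (gensC Z C)" using circ_span[OF assms A, of C] unfolding Z_def by simp
  qed
  have "SED n Y k 0 (eval_circuit n C) = fv.dim ?S"
    unfolding SED_def Z_def Let_def by simp
  also have "\<dots> \<le> card (gensC Z C)"
    using fv.dim_le_card[OF sub] gensC_fin by blast
  also have "\<dots> \<le> (\<Sum>P\<leftarrow>C. 2 ^ length P)" using gensC_fin by blast
  also have "\<dots> \<le> length C * 2 ^ formal_degree C"
  proof (rule sum_list_bound)
    fix P assume "P \<in> set C"
    then have "length P \<le> formal_degree C"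
      unfolding formal_degree_def by (intro Max_ge) auto
    then show "2 ^ length P \<le> (2::nat) ^ formal_degree C" by (simp add: power_increasing)
  qed
  finally show ?thesis unfolding top_fanin_def .
qed

end
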